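(* There is a polynomial $q$ such that for every $\mathsf{C\text{-}RASP}_+$ program $P$ with $L(P)\neq\emptyset$ there exists a string $w\in L(P)$ with $|w|\le 2^{q(|P|)}$. This exponential bound is optimal in the worst case: there is an infinite family of $\mathsf{C\text{-}RASP}_+$ programs $P_n$ with nonempty languages whose shortest accepted string has length exponential in $|P_n|$.
   Context: $\mathsf{C\text{-}RASP}_+$ formulas over a finite alphabet $\Sigma$: $\phi ::= \sigma \mid \neg\phi \mid \phi_1\wedge\phi_2 \mid \sum_{t\in\mathcal T}\alpha_t t\sim k$, terms $t ::= \#[\phi] \mid c$, with $\sigma\in\Sigma$, $\alpha_t,k,c\in\mathbb{N}$, ${\sim}\in\{\ge,>,=,<,\le\}$. At position $i$ of $w$: $w,i\models\sigma$ iff $w_i=\sigma$; Boolean connectives as usual; $\#[\phi]$ evaluates to $|\{j\in[1,i]: w,j\models\phi\}|$, $c$ to $c$, and comparisons are integer comparisons. $w\models\phi$ iff $w,|w|\models\phi$; $L(\phi)=\{w:w\models\phi\}$. Programs are straight-line (DAG) representations $(\phi_1,\dots,\phi_m)$ with references to earlier lines; the size $|P|$ is the total number of symbols with constants encoded in binary and each reference counted as 1. *)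

theory Defs
  imports Main "HOL-Computational_Algebra.Polynomial"
begin

datatype cmp = CGe | CGt | CEq | CLt | CLe

datatype 'a form =
    Sym 'a
  | Neg "'a form"
  | Conj "'a form" "'a form"
  | Cmp "(nat \<times> 'a cterm) list" cmp nat  \<comment> \<open>\<Sum> \<alpha>_t t \<sim> k\<close>
  | Ref nat                                 \<comment> \<open>reference to an earlier line\<close>
and 'a cterm =
    Cnt "'a form"
  | Cst nat

fun cmp_sem :: "cmp \<Rightarrow> nat \<Rightarrow> nat \<Rightarrow> bool" where
  "cmp_sem CGe x k = (x \<ge> k)"
| "cmp_sem CGt x k = (x > k)"
| "cmp_sem CEq x k = (x = k)"
| "cmp_sem CLt x k = (x < k)"
| "cmp_sem CLe x k = (x \<le> k)"

text \<open>Semantics at position i (1-based) of word w; env gives the truth values of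
  earlier program lines (line index, position).\<close>
fun holds :: "(nat \<Rightarrow> nat \<Rightarrow> bool) \<Rightarrow> 'a list \<Rightarrow> nat \<Rightarrow> 'a form \<Rightarrow> bool"
and tval :: "(nat \<Rightarrow> nat \<Rightarrow> bool) \<Rightarrow> 'a list \<Rightarrow> nat \<Rightarrow> 'a cterm \<Rightarrow> nat" where
  "holds env w i (Sym s) = (1 \<le> i \<and> i \<le> length w \<and> w ! (i - 1) = s)"
| "holds env w i (Neg f) = (\<not> holds env w i f)"
| "holds env w i (Conj f g) = (holds env w i f \<and> holds env w i g)"
| "holds env w i (Cmp ts c k) =
     cmp_sem c (sum_list (map (\<lambda>p. fst p * tval env w i (snd p)) ts)) k"
| "holds env w i (Ref j) = env j i"
| "tval env w i (Cnt f) = card {j \<in> {1..i}. holds env w j f}"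
| "tval env w i (Cst c) = c"

type_synonym 'a prog = "'a form list"

primrec penv :: "'a prog \<Rightarrow> 'a list \<Rightarrow> nat \<Rightarrow> (nat \<Rightarrow> nat \<Rightarrow> bool)" where
  "penv P w 0 = (\<lambda>_ _. False)"
| "penv P w (Suc k) = (penv P w k)(k := (\<lambda>i. holds (penv P w k) w i (P ! k)))"

fun refs :: "'a form \<Rightarrow> nat set"
and trefs :: "'a cterm \<Rightarrow> nat set" where
  "refs (Sym s) = {}"
| "refs (Neg f) = refs f"
| "refs (Conj f g) = refs f \<union> refs g"
| "refs (Cmp ts c k) = (\<Union>p \<in> set ts. trefs (snd p))"
| "refs (Ref j) = {j}"
| "trefs (Cnt f) = refs f"
| "trefs (Cst c) = {}"

definition wf_prog :: "'a prog \<Rightarrow> bool" where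
  "wf_prog P \<longleftrightarrow> P \<noteq> [] \<and> (\<forall>k < length P. \<forall>j \<in> refs (P ! k). j < k)"

definition accepts :: "'a prog \<Rightarrow> 'a list \<Rightarrow> bool" where
  "accepts P w \<longleftrightarrow> penv P w (length P) (length P - 1) (length w)"

definition lang :: "'a prog \<Rightarrow> 'a list set" where
  "lang P = {w. accepts P w}"

fun blen :: "nat \<Rightarrow> nat" where
  "blen n = (if n \<le> 1 then 1 else 1 + blen (n div 2))"

declare blen.simps[simp del]

fun fsize :: "'a form \<Rightarrow> nat"
and tsize :: "'a cterm \<Rightarrow> nat" where
  "fsize (Sym s) = 1"
| "fsize (Neg f) = 1 + fsize f"
| "fsize (Conj f g) = 1 + fsize f + fsize g"
| "fsize (Cmp ts c k) =
     sum_list (map (\<lambda>p. 1 + blen (fst p) + tsize (snd p)) ts) + 1 + blen k"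
| "fsize (Ref j) = 1"
| "tsize (Cnt f) = 1 + fsize f"
| "tsize (Cst c) = blen c"

definition psize :: "'a prog \<Rightarrow> nat" where
  "psize P = sum_list (map fsize P)"

end

theory Submission
  imports Defs "HOL-Library.FuncSet"
begin

fun cnts :: "'a form \<Rightarrow> 'a form set"
and tcnts :: "'a cterm \<Rightarrow> 'a form set" where
  "cnts (Sym s) = {}"
| "cnts (Neg f) = cnts f"
| "cnts (Conj f g) = cnts f \<union> cnts g"
| "cnts (Cmp ts c k) = (\<Union>p \<in> set ts. tcnts (snd p))"
| "cnts (Ref j) = {}"
| "tcnts (Cnt f) = insert f (cnts f)"
| "tcnts (Cst c) = {}"

fun cb :: "nat \<Rightarrow> 'a form \<Rightarrow> bool"
and tcb :: "nat \<Rightarrow> 'a cterm \<Rightarrow> bool" where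
  "cb C (Sym s) = True"
| "cb C (Neg f) = cb C f"
| "cb C (Conj f g) = (cb C f \<and> cb C g)"
| "cb C (Cmp ts c k) = (k < C \<and> (\<forall>p \<in> set ts. tcb C (snd p)))"
| "cb C (Ref j) = True"
| "tcb C (Cnt f) = cb C f"
| "tcb C (Cst c) = True"

definition cnt :: "(nat \<Rightarrow> nat \<Rightarrow> bool) \<Rightarrow> 'a list \<Rightarrow> nat \<Rightarrow> 'a form \<Rightarrow> nat" where
  "cnt E w i g = card {j \<in> {1..i}. holds E w j g}"

lemma card_UN_list:
  assumes "\<forall>x\<in>set xs. finite (F x)"
  shows "finite (\<Union>x\<in>set xs. F x) \<and> card (\<Union>x\<in>set xs. F x) \<le> sum_list (map (\<lambda>x. card (F x)) xs)"
  using assms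
proof (induction xs)
  case Nil then show ?case by simp
next
  case (Cons a xs)
  then show ?case using card_Un_le[of "F a" "\<Union>x\<in>set xs. F x"] by auto
qed

lemma sum_list_mono_nat:
  "(\<forall>x\<in>set xs. (f x::nat) \<le> g x) \<Longrightarrow> sum_list (map f xs) \<le> sum_list (map g xs)"
  by (induction xs) (auto intro: add_mono)

lemma cnts_size:
  fixes f :: "'a form" and t :: "'a cterm"
  shows "finite (cnts f) \<and> card (cnts f) \<le> fsize f"
  and "finite (tcnts t) \<and> card (tcnts t) \<le> tsize t"
proof (induct f and t rule: refs_trefs.induct)
  case (3 f g)
  then show ?case using card_Un_le[of "cnts f" "cnts g"] by auto
next
  case (4 ts c k)
  have a: "finite (\<Union>p\<in>set ts. tcnts (snd p)) \<and> card (\<Union>p\<in>set ts. tcnts (snd p)) \<le> sum_list (map (\<lambda>p. card (tcnts (snd p))) ts)"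
    using card_UN_list[of ts "\<lambda>p. tcnts (snd p)"] 4 by auto
  have "sum_list (map (\<lambda>p. card (tcnts (snd p))) ts) \<le> sum_list (map (\<lambda>p. 1 + blen (fst p) + tsize (snd p)) ts)"
    using 4 by (intro sum_list_mono_nat) fastforce
  then show ?case using a by auto
next
  case (6 f)
  then show ?case by (auto simp: card_insert_if)
qed auto

lemma cnts_trans:
  fixes f :: "'a form" and t :: "'a cterm"
  shows "g \<in> cnts f \<Longrightarrow> cnts g \<subseteq> cnts f \<and> refs g \<subseteq> refs f \<and> (cb C f \<longrightarrow> cb C g)"
  and "g \<in> tcnts t \<Longrightarrow> cnts g \<subseteq> tcnts t \<and> refs g \<subseteq> trefs t \<and> (tcb C t \<longrightarrow> cb C g)"
proof (induct f and t rule: refs_trefs.induct)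
  case (4 ts c k)
  then obtain p where p: "p \<in> set ts" "g \<in> tcnts (snd p)" by auto
  then have "cnts g \<subseteq> tcnts (snd p) \<and> refs g \<subseteq> trefs (snd p) \<and> (tcb C (snd p) \<longrightarrow> cb C g)"
    using 4 by auto
  then show ?case using p by auto
qed auto

lemma blen_bound: "k < 2 ^ blen k"
proof (induction k rule: blen.induct)
  case (1 n)
  show ?case
  proof (cases "n \<le> 1")
    case True then show ?thesis by (auto simp: blen.simps)
  next
    case False
    then have "n div 2 < 2 ^ blen (n div 2)" using 1 by auto
    then show ?thesis using False by (subst blen.simps) auto
  qed
qed

lemma cb_size:
  fixes f :: "'a form" and t :: "'a cterm"
  shows "fsize f \<le> s \<Longrightarrow> cb (2^s) f"
  and "tsize t \<le> s \<Longrightarrow> tcb (2^s) t"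
proof (induct f and t arbitrary: s and s rule: refs_trefs.induct)
  case (4 ts c k)
  have "k < 2 ^ blen k" by (rule blen_bound)
  also have "\<dots> \<le> 2 ^ s" using 4(2) by (intro power_increasing) auto
  finally have k: "k < 2^s" .
  { fix p assume p: "p \<in> set ts"
    have "1 + blen (fst p) + tsize (snd p) \<le> sum_list (map (\<lambda>p. 1 + blen (fst p) + tsize (snd p)) ts)"
      using p by (intro member_le_sum_list) auto
    then have "tsize (snd p) \<le> s" using 4(2) by auto
    then have "tcb (2^s) (snd p)" using 4(1) p by auto }
  then show ?case using k by auto
qed auto

lemma cap1: "min (C::nat) (a*x + s) = min C (a * min C x + min C s)"
proof (cases "a = 0")
  case True then show ?thesis by simp
next
  case False
  then have a1: "a \<ge> 1" by simp
  show ?thesis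
  proof (cases "x \<le> C")
    case True then show ?thesis by (simp add: min_def)
  next
    case False
    then have "a*x \<ge> x" using a1 by simp
    then have "C \<le> a*x + s" using False by linarith
    then have l: "min C (a*x + s) = C" by (simp add: min_absorb1)
    have "a*C \<ge> C" using a1 by simp
    then have "C \<le> a * C + min C s" by (rule trans_le_add1)
    moreover have "min C x = C" using False by simp
    ultimately have "C \<le> a * min C x + min C s" by metis
    then have "min C (a * min C x + min C s) = C" by (simp add: min_absorb1)
    then show ?thesis using l by simp
  qed
qed

lemma cap_sum: "min (C::nat) (sum_list (map (\<lambda>p. fst p * x p) ts)) = min C (sum_list (map (\<lambda>p. fst p * min C (x p)) ts))"
proof (induction ts)
  case Nil then show ?case by simp
next
  case (Cons p ts)
  let ?S = "sum_list (map (\<lambda>p. fst p * x p) ts)"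
  let ?S' = "sum_list (map (\<lambda>p. fst p * min C (x p)) ts)"
  have "min C (fst p * x p + ?S) = min C (fst p * min C (x p) + min C ?S)" by (rule cap1)
  also have "\<dots> = min C (fst p * min C (x p) + min C ?S')" using Cons by simp
  also have "\<dots> = min C (fst p * min C (min C (x p)) + min C ?S')" by simp
  also have "\<dots> = min C (fst p * min C (x p) + ?S')" by (rule cap1[symmetric])
  finally show ?case by simp
qed

lemma cmp_cap: "k < C \<Longrightarrow> cmp_sem c s k = cmp_sem c (min C s) k"
  by (cases c) (auto simp: min_def)

lemma cnt_step: "i \<ge> 1 \<Longrightarrow> cnt E w i g = cnt E w (i-1) g + (if holds E w i g then 1 else 0)"
proof -
  assume "i \<ge> 1"
  then obtain m where m: "i = Suc m" by (cases i) auto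
  have "{j \<in> {1..Suc m}. holds E w j g} = {j \<in> {1..m}. holds E w j g} \<union> (if holds E w (Suc m) g then {Suc m} else {})"
    by (auto simp: le_Suc_eq)
  then show ?thesis unfolding cnt_def m by (auto simp: card_insert_if)
qed

lemma min_add_cap: "min (C::nat) (x + b) = min C (min C x + b)"
  by (simp add: min_def)

lemma det:
  fixes f :: "'a form" and t :: "'a cterm"
  assumes prev: "\<forall>g\<in>S. min C (cnt E w (i-1) g) = min C (cnt E' w' (i'-1) g)"
    and sym: "\<forall>s. holds E w i (Sym s) = holds E' w' i' (Sym s)"
    and i1: "i \<ge> 1" and i1': "i' \<ge> 1"
  shows "cnts f \<subseteq> S \<Longrightarrow> cb C f \<Longrightarrow> (\<forall>j\<in>refs f. E j i = E' j i') \<Longrightarrow> holds E w i f = holds E' w' i' f"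
    and "tcnts t \<subseteq> S \<Longrightarrow> tcb C t \<Longrightarrow> (\<forall>j\<in>trefs t. E j i = E' j i') \<Longrightarrow> min C (tval E w i t) = min C (tval E' w' i' t)"
proof (induct f and t rule: refs_trefs.induct)
  case (1 s)
  then show ?case using sym by blast
next
  case (4 ts c k)
  let ?x = "\<lambda>p. tval E w i (snd p)"
  let ?y = "\<lambda>p. tval E' w' i' (snd p)"
  have eq: "\<forall>p\<in>set ts. min C (?x p) = min C (?y p)"
    using 4 by fastforce
  have "map (\<lambda>p. fst p * min C (?x p)) ts = map (\<lambda>p. fst p * min C (?y p)) ts"
    using eq by simp
  then have m: "min C (sum_list (map (\<lambda>p. fst p * ?x p) ts)) = min C (sum_list (map (\<lambda>p. fst p * ?y p) ts))"
    by (simp only: cap_sum[of C ?x] cap_sum[of C ?y])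
  have kC: "k < C" using 4 by simp
  have "holds E w i (Cmp ts c k) = cmp_sem c (min C (sum_list (map (\<lambda>p. fst p * ?x p) ts))) k"
    using cmp_cap[OF kC, of c] by simp
  also have "\<dots> = cmp_sem c (min C (sum_list (map (\<lambda>p. fst p * ?y p) ts))) k" using m by simp
  also have "\<dots> = holds E' w' i' (Cmp ts c k)"
    using cmp_cap[OF kC, of c] by simp
  finally show ?case .
next
  case (6 g)
  have hg: "holds E w i g = holds E' w' i' g" using 6 by auto
  have gS: "g \<in> S" using 6 by auto
  have "min C (tval E w i (Cnt g)) = min C (cnt E w i g)" by (simp add: cnt_def)
  also have "\<dots> = min C (min C (cnt E w (i-1) g) + (if holds E w i g then 1 else 0))"
    using cnt_step[OF i1, of E w g] min_add_cap by simp
  also have "\<dots> = min C (min C (cnt E' w' (i'-1) g) + (if holds E' w' i' g then 1 else 0))"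
    using prev gS hg by simp
  also have "\<dots> = min C (cnt E' w' i' g)"
    using cnt_step[OF i1', of E' w' g] min_add_cap by simp
  finally show ?case by (simp add: cnt_def)
qed auto

lemma env_agree:
  fixes f :: "'a form" and t :: "'a cterm"
  shows "(\<forall>j\<in>refs f. E j = E' j) \<Longrightarrow> holds E w i f = holds E' w i f"
    and "(\<forall>j\<in>trefs t. E j = E' j) \<Longrightarrow> tval E w i t = tval E' w i t"
proof (induct f and t arbitrary: i and i rule: refs_trefs.induct)
  case (4 ts c k)
  then have eq: "\<And>p. p \<in> set ts \<Longrightarrow> tval E w i (snd p) = tval E' w i (snd p)"
    by fastforce
  show ?case using eq by (simp cong: map_cong)
qed auto

lemma prefix_gen:
  fixes f :: "'a form" and t :: "'a cterm"
  assumes env: "\<forall>j. \<forall>i\<le>m. E j i = E' j i" and lw: "m \<le> length w" and lw': "m \<le> length w'"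
    and tk: "take m w = take m w'"
  shows "i \<le> m \<Longrightarrow> holds E w i f = holds E' w' i f"
    and "i \<le> m \<Longrightarrow> tval E w i t = tval E' w' i t"
proof (induct f and t arbitrary: i and i rule: refs_trefs.induct)
  case (1 s)
  have "1 \<le> i \<Longrightarrow> w ! (i - 1) = w' ! (i - 1)"
    using tk 1 lw lw' by (metis Suc_pred' Suc_le_lessD less_le_trans nth_take not_one_le_zero zero_less_iff_neq_zero)
  then show ?case using 1 lw lw' by auto
next
  case (4 ts c k)
  then have eq: "\<And>p. p \<in> set ts \<Longrightarrow> tval E w i (snd p) = tval E' w' i (snd p)"
    by fastforce
  show ?case using eq by (simp cong: map_cong)
next
  case (5 j)
  then show ?case using env by simp
next
  case (6 g)
  have "{j \<in> {1..i}. holds E w j g} = {j \<in> {1..i}. holds E' w' j g}"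
    using 6 by auto
  then show ?case by simp
qed auto

lemma penv_prefix: "\<forall>j. \<forall>i\<le>length u. penv P (u@v) k j i = penv P u k j i"
proof (induction k)
  case 0 then show ?case by simp
next
  case (Suc k)
  have "\<forall>i\<le>length u. holds (penv P (u@v) k) (u@v) i (P!k) = holds (penv P u k) u i (P!k)"
    using prefix_gen(1)[where E="penv P (u@v) k" and E'="penv P u k" and m="length u" and w="u@v" and w'=u, OF Suc] by simp
  then show ?case using Suc by simp
qed

lemma cnt_prefix: "i \<le> length u \<Longrightarrow> cnt (penv P (u@v) k) (u@v) i g = cnt (penv P u k) u i g"
  unfolding cnt_def using prefix_gen(2)[where E="penv P (u@v) k" and E'="penv P u k" and m="length u" and w="u@v" and w'=u and t="Cnt g", OF penv_prefix] by simp

lemma holds_prefix: "i \<le> length u \<Longrightarrow> holds (penv P (u@v) k) (u@v) i g = holds (penv P u k) u i g"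
  using prefix_gen(1)[where E="penv P (u@v) k" and E'="penv P u k" and m="length u" and w="u@v" and w'=u and f=g, OF penv_prefix] by simp

lemma penv_stable: "j < k \<Longrightarrow> penv P w k j = penv P w (Suc j) j"
  by (induction k) (auto simp: less_Suc_eq)

lemma penv_fix:
  assumes wf: "wf_prog P" and j: "j < length P"
  shows "penv P w (length P) j i = holds (penv P w (length P)) w i (P!j)"
proof -
  have "penv P w (length P) j i = holds (penv P w j) w i (P!j)"
    using penv_stable[OF j, of P w] by simp
  also have "\<dots> = holds (penv P w (length P)) w i (P!j)"
  proof (rule env_agree(1), intro ballI)
    fix j' assume "j' \<in> refs (P!j)"
    then have "j' < j" using wf j unfolding wf_prog_def by auto
    then show "penv P w j j' = penv P w (length P) j'"
      using penv_stable[of j' j P w] penv_stable[of j' "length P" P w] j by simp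
  qed
  finally show ?thesis .
qed

locale prg =
  fixes P :: "'a prog"
  assumes wf: "wf_prog P"
begin

definition "SS = (\<Union>f\<in>set P. cnts f)"
definition "CC = (2::nat) ^ psize P"
definition "Ew w = penv P w (length P)"
definition "st w = (\<lambda>g\<in>SS. min CC (cnt (Ew w) w (length w) g))"

lemma line_size: "f \<in> set P \<Longrightarrow> fsize f \<le> psize P"
  unfolding psize_def by (intro member_le_sum_list) auto

lemma line_cb: "f \<in> set P \<Longrightarrow> cb CC f"
  unfolding CC_def using cb_size(1) line_size by blast

lemma line_refs: "f \<in> set P \<Longrightarrow> refs f \<subseteq> {..<length P}"
proof -
  assume "f \<in> set P"
  then obtain k where k: "k < length P" "f = P!k" by (auto simp: in_set_conv_nth)
  then show ?thesis using wf unfolding wf_prog_def by fastforce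
qed

lemma step:
  assumes eq: "st u = st u'"
  shows "(\<forall>j<length P. Ew (u@[a]) j (Suc (length u)) = Ew (u'@[a]) j (Suc (length u'))) \<and>
         st (u@[a]) = st (u'@[a])"
proof -
  let ?E = "Ew (u@[a])" and ?E' = "Ew (u'@[a])" and ?i = "Suc (length u)" and ?i' = "Suc (length u')"
  have prev: "\<forall>g\<in>SS. min CC (cnt ?E (u@[a]) (?i-1) g) = min CC (cnt ?E' (u'@[a]) (?i'-1) g)"
  proof
    fix g assume g: "g \<in> SS"
    have "min CC (cnt ?E (u@[a]) (?i-1) g) = st u g"
      using g cnt_prefix[of "length u" u P "[a]" "length P" g] by (simp add: st_def Ew_def)
    also have "\<dots> = st u' g" using eq by simp
    also have "\<dots> = min CC (cnt ?E' (u'@[a]) (?i'-1) g)"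
      using g cnt_prefix[of "length u'" u' P "[a]" "length P" g] by (simp add: st_def Ew_def)
    finally show "min CC (cnt ?E (u@[a]) (?i-1) g) = min CC (cnt ?E' (u'@[a]) (?i'-1) g)" .
  qed
  have sym: "\<forall>s. holds ?E (u@[a]) ?i (Sym s) = holds ?E' (u'@[a]) ?i' (Sym s)"
    by simp
  note D = det[OF prev sym, simplified]
  have lines: "\<forall>j<length P. ?E j ?i = ?E' j ?i'"
  proof (intro allI impI)
    fix j show "j < length P \<Longrightarrow> ?E j ?i = ?E' j ?i'"
    proof (induction j rule: less_induct)
      case (less j)
      have mem: "P!j \<in> set P" using less by simp
      have "?E j ?i = holds ?E (u@[a]) ?i (P!j)" unfolding Ew_def using penv_fix[OF wf less(2)] by simp
      also have "\<dots> = holds ?E' (u'@[a]) ?i' (P!j)"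
      proof (rule D(1))
        show "cnts (P!j) \<subseteq> SS" unfolding SS_def using mem by auto
        show "cb CC (P!j)" using line_cb mem by simp
        show "\<forall>j'\<in>refs (P!j). ?E j' ?i = ?E' j' ?i'"
          using less wf unfolding wf_prog_def by auto
      qed
      also have "\<dots> = ?E' j ?i'" unfolding Ew_def using penv_fix[OF wf less(2)] by simp
      finally show ?case .
    qed
  qed
  have "st (u@[a]) = st (u'@[a])"
  proof
    fix g
    show "st (u@[a]) g = st (u'@[a]) g"
    proof (cases "g \<in> SS")
      case False then show ?thesis by (simp add: st_def)
    next
      case True
      then obtain f where f: "f \<in> set P" "g \<in> cnts f" unfolding SS_def by auto
      have hg: "holds ?E (u@[a]) ?i g = holds ?E' (u'@[a]) ?i' g"
      proof (rule D(1))
        show "cnts g \<subseteq> SS" using f cnts_trans(1)[OF f(2)] unfolding SS_def by blast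
        show "cb CC g" using f cnts_trans(1)[OF f(2)] line_cb by blast
        show "\<forall>j'\<in>refs g. ?E j' ?i = ?E' j' ?i'"
          using f cnts_trans(1)[OF f(2)] line_refs lines by blast
      qed
      have pv: "min CC (cnt ?E (u@[a]) (length u) g) = min CC (cnt ?E' (u'@[a]) (length u') g)"
        using prev True by simp
      have "st (u@[a]) g = min CC (cnt ?E (u@[a]) ?i g)" using True by (simp add: st_def)
      also have "\<dots> = min CC (min CC (cnt ?E (u@[a]) (length u) g) + (if holds ?E (u@[a]) ?i g then 1 else 0))"
        using cnt_step[of ?i ?E "u@[a]" g] min_add_cap by simp
      also have "\<dots> = min CC (min CC (cnt ?E' (u'@[a]) (length u') g) + (if holds ?E' (u'@[a]) ?i' g then 1 else 0))"
        using pv hg by simp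
      also have "\<dots> = min CC (cnt ?E' (u'@[a]) ?i' g)"
        using cnt_step[of ?i' ?E' "u'@[a]" g] min_add_cap by simp
      also have "\<dots> = st (u'@[a]) g" using True by (simp add: st_def)
      finally show ?thesis .
    qed
  qed
  then show ?thesis using lines by simp
qed

lemma st_app: "st u = st u' \<Longrightarrow> st (u@v) = st (u'@v)"
proof (induction v rule: rev_induct)
  case Nil then show ?case by simp
next
  case (snoc a v)
  then show ?case using step[of "u@v" "u'@v" a] by simp
qed

lemma acc_eq:
  assumes "st u = st u'"
  shows "accepts P (u@v@[a]) = accepts P (u'@v@[a])"
proof -
  have "P \<noteq> []" using wf unfolding wf_prog_def by simp
  then have "length P - 1 < length P" by simp
  then show ?thesis using step[OF st_app[OF assms, of v], of a]
    unfolding accepts_def Ew_def by simp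
qed

definition "BB = PiE SS (\<lambda>_. {0..CC})"

lemma st_in: "st w \<in> BB"
  unfolding BB_def st_def by auto

lemma finite_SS: "finite SS"
  unfolding SS_def using cnts_size(1) by blast

lemma shorten:
  assumes acc: "accepts P w" and long: "card BB < length w"
  shows "\<exists>w'. accepts P w' \<and> length w' < length w"
proof -
  have finB: "finite BB" unfolding BB_def using finite_SS by (intro finite_PiE) auto
  have "\<not> inj_on (\<lambda>i. st (take i w)) {..<length w}"
  proof
    assume inj: "inj_on (\<lambda>i. st (take i w)) {..<length w}"
    have "length w = card ((\<lambda>i. st (take i w)) ` {..<length w})"
      using card_image[OF inj] by simp
    also have "\<dots> \<le> card BB" using finB st_in by (intro card_mono) auto
    finally show False using long by simp
  qed
  then obtain i j where ij: "i < length w" "j < length w" "i \<noteq> j" "st (take i w) = st (take j w)"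
    unfolding inj_on_def by auto
  have "\<exists>i j. i < j \<and> j < length w \<and> st (take i w) = st (take j w)"
  proof (cases "i < j")
    case True then show ?thesis using ij by blast
  next
    case False then show ?thesis using ij by (intro exI[of _ j] exI[of _ i]) auto
  qed
  then obtain i j where ij: "i < j" "j < length w" "st (take i w) = st (take j w)" by blast
  have "drop j w \<noteq> []" using ij by simp
  then obtain v a where va: "drop j w = v @ [a]" by (metis rev_exhaust)
  have "accepts P (take j w @ v @ [a])" using acc va by (metis append_take_drop_id)
  then have "accepts P (take i w @ v @ [a])" using acc_eq[OF ij(3), of v a] by simp
  moreover have "length (drop j w) = length v + 1" using va by simp
  then have "length w = j + length v + 1" using ij by simp
  then have "length (take i w @ v @ [a]) < length w"
    using ij by simp
  ultimately show ?thesis by blast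
qed

lemma short_exists:
  "accepts P w \<Longrightarrow> \<exists>w'. accepts P w' \<and> length w' \<le> card BB"
proof (induction "length w" arbitrary: w rule: less_induct)
  case less
  show ?case
  proof (cases "length w \<le> card BB")
    case True then show ?thesis using less by blast
  next
    case False
    then obtain w' where "accepts P w'" "length w' < length w" using shorten less by fastforce
    then show ?thesis using less by blast
  qed
qed

lemma card_SS: "card SS \<le> psize P"
proof -
  have "card SS \<le> sum_list (map (\<lambda>f. card (cnts f)) P)"
    unfolding SS_def using card_UN_list[of P cnts] cnts_size(1) by blast
  also have "\<dots> \<le> sum_list (map fsize P)"
    using cnts_size(1) by (intro sum_list_mono_nat) blast
  finally show ?thesis unfolding psize_def .
qed

lemma card_BB: "card BB \<le> 2 ^ ((psize P + 1) * psize P)"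
proof -
  let ?s = "psize P"
  have "card BB = (CC + 1) ^ card SS"
    unfolding BB_def using finite_SS by (simp add: card_PiE)
  also have "\<dots> \<le> (CC + 1) ^ ?s" using card_SS by (intro power_increasing) auto
  also have "\<dots> \<le> (2 ^ (?s + 1)) ^ ?s"
    unfolding CC_def by (intro power_mono) auto
  also have "\<dots> = 2 ^ ((?s + 1) * ?s)" by (rule power_mult[symmetric])
  finally show ?thesis .
qed

end

lemma blen_pow: "blen (2 ^ m) = m + 1"
proof (induction m)
  case 0 then show ?case by (simp add: blen.simps)
next
  case (Suc m)
  have "(1::nat) \<le> 2 ^ m" by simp
  then have "(2::nat) ^ Suc m > 1" by (simp only: power_Suc)
  then show ?case using Suc by (subst blen.simps) auto
qed

definition lowP :: "'a \<Rightarrow> nat \<Rightarrow> 'a prog" where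
  "lowP x n = [Cmp [(1, Cnt (Sym x))] CGe (2 ^ (n+1))]"

lemma blen1: "blen (Suc 0) = Suc 0" by (rule trans[OF blen.simps[of "Suc 0"]]) simp

lemma blen_pow2: "blen (2 * 2 ^ n) = n + 2"
  using blen_pow[of "Suc n"] by simp

lemma lowP_size: "psize (lowP x n) = n + 7"
  by (simp add: lowP_def psize_def blen_pow blen_pow2 blen1)

lemma lowP_acc: "accepts (lowP x n) w \<longleftrightarrow> 2 ^ (n+1) \<le> card {j \<in> {1..length w}. w ! (j - 1) = x}"
proof -
  have "{j \<in> {1..length w}. 1 \<le> j \<and> j \<le> length w \<and> w ! (j - 1) = x} = {j \<in> {1..length w}. w ! (j - 1) = x}"
    by auto
  then show ?thesis by (simp add: accepts_def lowP_def)
qed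

lemma lowP_wf: "wf_prog (lowP x n)"
  by (simp add: wf_prog_def lowP_def)

lemma lowP_ne: "replicate (2^(n+1)) x \<in> lang (lowP x n)"
proof -
  have "{j \<in> {1..length (replicate (2^(n+1)) x)}. (replicate (2^(n+1)) x) ! (j - 1) = x} = {1..2^(n+1)}"
    by auto
  then show ?thesis unfolding lang_def by (simp add: lowP_acc)
qed

lemma lowP_long: "w \<in> lang (lowP x n) \<Longrightarrow> 2 ^ (n+1) \<le> length w"
proof -
  assume "w \<in> lang (lowP x n)"
  then have "2 ^ (n+1) \<le> card {j \<in> {1..length w}. w ! (j - 1) = x}" by (simp add: lang_def lowP_acc)
  also have "\<dots> \<le> card {1..length w}" by (intro card_mono) auto
  finally show ?thesis by simp
qed

theorem proposition4p6:
  fixes dummy :: "'a :: finite"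
  shows "(\<exists>q :: nat poly. \<forall>P :: 'a prog. wf_prog P \<longrightarrow> lang P \<noteq> {} \<longrightarrow>
            (\<exists>w \<in> lang P. length w \<le> 2 ^ poly q (psize P)))
       \<and> (\<exists>(Pn :: nat \<Rightarrow> 'a prog) (c :: real). c > 0 \<and> strict_mono (\<lambda>n. psize (Pn n)) \<and>
            (\<forall>n. wf_prog (Pn n) \<and> lang (Pn n) \<noteq> {} \<and>
                 (\<forall>w \<in> lang (Pn n). 2 powr (c * real (psize (Pn n))) \<le> real (length w))))"
proof (intro conjI)
  show "\<exists>q :: nat poly. \<forall>P :: 'a prog. wf_prog P \<longrightarrow> lang P \<noteq> {} \<longrightarrow>
            (\<exists>w \<in> lang P. length w \<le> 2 ^ poly q (psize P))"
  proof (intro exI allI impI)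
    fix P :: "'a prog"
    assume wf: "wf_prog P" and ne: "lang P \<noteq> {}"
    interpret prg P using wf by unfold_locales
    obtain w where "accepts P w" using ne unfolding lang_def by auto
    then obtain w' where w': "accepts P w'" "length w' \<le> card BB" using short_exists by blast
    have "poly [:0, 1, 1:] (psize P) = (psize P + 1) * psize P" by (simp add: algebra_simps)
    then have "length w' \<le> 2 ^ poly [:0, 1, 1:] (psize P)" using w'(2) card_BB by simp
    then show "\<exists>w \<in> lang P. length w \<le> 2 ^ poly [:0, 1, 1:] (psize P)"
      using w'(1) unfolding lang_def by auto
  qed
next
  let ?x = "undefined :: 'a"
  show "\<exists>(Pn :: nat \<Rightarrow> 'a prog) (c :: real). c > 0 \<and> strict_mono (\<lambda>n. psize (Pn n)) \<and>
            (\<forall>n. wf_prog (Pn n) \<and> lang (Pn n) \<noteq> {} \<and>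
                 (\<forall>w \<in> lang (Pn n). 2 powr (c * real (psize (Pn n))) \<le> real (length w)))"
  proof (intro exI[of _ "lowP ?x"] exI[of _ "1/7"] conjI allI ballI)
    show "(0::real) < 1/7" by simp
    show "strict_mono (\<lambda>n. psize (lowP ?x n))" by (simp add: lowP_size strict_mono_def)
    fix n
    show "wf_prog (lowP ?x n)" by (rule lowP_wf)
    show "lang (lowP ?x n) \<noteq> {}" using lowP_ne[of n ?x] by (metis empty_iff)
    fix w assume w: "w \<in> lang (lowP ?x n)"
    have "2 powr (1/7 * real (psize (lowP ?x n))) \<le> 2 powr (real (n+1))"
      by (simp add: lowP_size)
    also have "\<dots> = 2 ^ (n+1)" by (rule powr_realpow) simp
    also have "\<dots> \<le> real (length w)" using lowP_long[OF w]
      by (metis of_nat_le_iff of_nat_numeral of_nat_power)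
    finally show "2 powr (1/7 * real (psize (lowP ?x n))) \<le> real (length w)" .
  qed
qed

end
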